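(* Let $\mathbb{N}$ be a strongly connected directed graph on vertices $\{1,\dots,m\}$, fix $q\in\{1,\dots,m\}$ and let $b_q$ be the $q$th unit vector of $\mathbb{R}^m$. Then there exists $G=[g_{ij}]\in\mathbb{R}^{m\times m}$ with all row sums equal to zero and with $g_{ij}=0$ whenever $j$ is not a neighbor of $i$ (i.e., whenever $j\neq i$ and there is no arc from $j$ to $i$ in $\mathbb{N}$), such that $(G,b_q)$ is a controllable pair.
   Context: In the neighbor graph, an arc from $j$ to $i$ means agent $j$ is a neighbor of agent $i$; every agent is considered a neighbor of itself. *)

theory Defs
  imports "HOL-Analysis.Analysis"
begin

text \<open>Vertices of the digraph are the elements of a finite type 'n (so m = CARD('n)).
  An arc relation E with E j i meaning: there is an arc from j to i (j is a neighbour of i).\<close>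

definition strongly_connected :: "('n \<Rightarrow> 'n \<Rightarrow> bool) \<Rightarrow> bool" where
  "strongly_connected E \<longleftrightarrow> (\<forall>u v. E\<^sup>*\<^sup>* u v)"

definition ctrb_columns :: "real^'n^'n \<Rightarrow> real^'n \<Rightarrow> (real^'n) set" where
  "ctrb_columns G b = {(((*v) G) ^^ k) b | k. k < CARD('n)}"

text \<open>(G,b) is controllable iff the controllability matrix has rank m,
  i.e. its column space has dimension m.\<close>
definition controllable_pair :: "real^'n^'n \<Rightarrow> real^'n \<Rightarrow> bool" where
  "controllable_pair G b \<longleftrightarrow> dim (span (ctrb_columns G b)) = CARD('n)"

definition unit_vec :: "'n::finite \<Rightarrow> real^'n" where
  "unit_vec q = (\<chi> i. if i = q then 1 else 0)"

end

theory Submission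
  imports Defs
begin

lemma vander_zero:
  fixes a :: "nat \<Rightarrow> real" and lam :: "'n::finite \<Rightarrow> real"
  assumes inj: "inj lam" and h: "\<forall>v. (\<Sum>k<CARD('n). a k * lam v ^ k) = 0"
  shows "\<forall>k<CARD('n). a k = 0"
proof -
  define m where "m = CARD('n)"
  define P where "P = (\<Sum>k<m. monom (a k) k)"
  have coeffP: "coeff P i = (if i < m then a i else 0)" for i
    unfolding P_def by (simp add: coeff_sum coeff_monom)
  have polyP: "poly P x = (\<Sum>k<m. a k * x ^ k)" for x
    unfolding P_def by (simp add: poly_sum poly_monom)
  have m1: "m \<ge> 1" unfolding m_def by (simp add: Suc_leI)
  have "P = 0"
  proof (rule ccontr)
    assume nz: "P \<noteq> 0"
    have "degree P \<le> m - 1"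
      by (rule degree_le) (use m1 in \<open>auto simp: coeffP\<close>)
    have sub: "range lam \<subseteq> {x. poly P x = 0}" using h by (auto simp: polyP m_def)
    have "m = card (range lam)" unfolding m_def using inj by (simp add: card_image)
    also have "\<dots> \<le> card {x. poly P x = 0}"
      by (rule card_mono[OF poly_roots_finite[OF nz] sub])
    also have "\<dots> \<le> degree P" by (rule card_poly_roots_bound[OF nz])
    finally show False using \<open>degree P \<le> m - 1\<close> m1 by linarith
  qed
  then show ?thesis using coeffP unfolding m_def by (metis coeff_0)
qed

lemma krylov_dot:
  fixes G :: "real^'n^'n" and y b :: "real^'n"
  assumes "y v* G = lam *s y"
  shows "y \<bullet> (((*v) G) ^^ k) b = lam ^ k * (y \<bullet> b)"
proof (induction k)
  case 0 then show ?case by simp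
next
  case (Suc k)
  have "y \<bullet> (((*v) G) ^^ Suc k) b = (y v* G) \<bullet> (((*v) G) ^^ k) b"
    by (simp add: dot_lmul_matrix)
  also have "\<dots> = lam * (y \<bullet> (((*v) G) ^^ k) b)"
    using assms by (simp add: scalar_mult_eq_scaleR)
  finally show ?case using Suc by simp
qed

lemma krylov_ctrb:
  fixes G :: "real^'n::finite^'n" and q :: 'n and lam :: "'n \<Rightarrow> real"
  assumes inj: "inj lam"
    and ev: "\<forall>v. \<exists>y. y v* G = lam v *s y \<and> y $ q \<noteq> 0"
  shows "controllable_pair G (unit_vec q)"
proof -
  define m where "m = CARD('n)"
  define b where "b = unit_vec q"
  define f where "f k = (((*v) G) ^^ k) b" for k
  have key: "\<forall>k<m. a k = 0" if rel: "(\<Sum>k<m. a k *\<^sub>R f k) = 0" for a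
  proof -
    have "\<forall>v. (\<Sum>k<CARD('n). a k * lam v ^ k) = 0"
    proof
      fix v
      obtain y where y: "y v* G = lam v *s y" "y $ q \<noteq> 0" using ev by blast
      have yb: "y \<bullet> b = y $ q"
        unfolding b_def unit_vec_def by (simp add: inner_vec_def if_distrib cong: if_cong)
      have "0 = y \<bullet> (\<Sum>k<m. a k *\<^sub>R f k)" using rel by simp
      also have "\<dots> = (\<Sum>k<m. a k * lam v ^ k) * y $ q"
        by (simp add: inner_sum_right f_def krylov_dot[OF y(1)] yb sum_distrib_right mult.assoc)
      finally show "(\<Sum>k<CARD('n). a k * lam v ^ k) = 0" using y(2) m_def by simp
    qed
    then show ?thesis using vander_zero[OF inj] m_def by blast
  qed
  have injf: "inj_on f {..<m}"
  proof (rule inj_onI, rule ccontr)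
    fix i j assume i: "i \<in> {..<m}" and j: "j \<in> {..<m}" and fij: "f i = f j" and ne: "i \<noteq> j"
    define a where "a k = (if k = i then 1 else if k = j then -1 else (0::real))" for k
    have "(\<Sum>k<m. a k *\<^sub>R f k) = (\<Sum>k<m. (if k = i then f i else 0) - (if k = j then f j else 0))"
      by (rule sum.cong) (use ne in \<open>auto simp: a_def\<close>)
    also have "\<dots> = 0" using i j fij by (simp add: sum_subtractf)
    finally have "a i = 0" using key i by blast
    then show False by (simp add: a_def)
  qed
  have indep: "independent (f ` {..<m})"
  proof
    assume "dependent (f ` {..<m})"
    then obtain u where u: "\<exists>v\<in>f ` {..<m}. u v \<noteq> 0" "(\<Sum>v\<in>f ` {..<m}. u v *\<^sub>R v) = 0"
      unfolding dependent_finite[OF finite_imageI[OF finite_lessThan]] by blast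
    have "(\<Sum>k<m. u (f k) *\<^sub>R f k) = 0" using u(2) by (simp add: sum.reindex[OF injf])
    then have "\<forall>k<m. u (f k) = 0" by (rule key)
    then show False using u(1) by auto
  qed
  have S: "ctrb_columns G (unit_vec q) = f ` {..<m}"
    unfolding ctrb_columns_def f_def b_def m_def by auto
  show ?thesis unfolding controllable_pair_def S
    using dim_span_eq_card_independent[OF indep] card_image[OF injf] m_def by simp
qed

lemma tree_exists:
  fixes E :: "'n \<Rightarrow> 'n \<Rightarrow> bool" and q :: 'n
  assumes sc: "strongly_connected E"
  shows "\<exists>p d. (\<forall>u. d u = (0::nat) \<longleftrightarrow> u = q) \<and> (\<forall>u. u \<noteq> q \<longrightarrow> E (p u) u \<and> d (p u) + 1 = d u)"
proof -
  define d where "d u = (LEAST n. (E ^^ n) q u)" for u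
  have ex: "\<exists>n. (E ^^ n) q u" for u
    using sc unfolding strongly_connected_def by (simp add: rtranclp_imp_relpowp)
  have dI: "(E ^^ d u) q u" for u unfolding d_def using ex by (rule LeastI_ex)
  have dle: "(E ^^ n) q u \<Longrightarrow> d u \<le> n" for u n unfolding d_def by (rule Least_le)
  have d0: "d u = 0 \<longleftrightarrow> u = q" for u
  proof
    assume "d u = 0" then show "u = q" using dI[of u] by simp
  next
    assume "u = q" then show "d u = 0" using dle[of 0 u] by simp
  qed
  have "\<exists>w. u \<noteq> q \<longrightarrow> E w u \<and> d w + 1 = d u" for u
  proof (cases "u = q")
    case False
    then obtain k where k: "d u = Suc k" using d0 by (cases "d u") auto
    then have "(E ^^ Suc k) q u" using dI[of u] by simp
    then obtain w where w: "(E ^^ k) q w" "E w u" by (rule relpowp_Suc_E)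
    have "d w \<le> k" using dle[OF w(1)] .
    moreover have "d u \<le> Suc (d w)" using dle[OF relpowp_Suc_I[OF dI[of w] w(2)]] .
    ultimately show ?thesis using w k by auto
  qed auto
  then obtain p where "\<forall>u. u \<noteq> q \<longrightarrow> E (p u) u \<and> d (p u) + 1 = d u" by metis
  then show ?thesis using d0 by blast
qed

lemma left_eig:
  fixes c :: "'n::finite \<Rightarrow> real" and p :: "'n \<Rightarrow> 'n" and d :: "'n \<Rightarrow> nat"
  assumes d0: "\<forall>u. d u = 0 \<longleftrightarrow> u = q" and pd: "\<forall>u. u \<noteq> q \<longrightarrow> d (p u) + 1 = d u"
    and cinj: "inj c" and cq: "c q = 0"
  shows "\<exists>y. y v* (\<chi> i j. c i * ((if j = p i then 1 else 0) - (if j = i then 1 else 0))) = (- c v) *s y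
              \<and> y $ q \<noteq> 0"
proof -
  define G :: "real^'n^'n" where "G = (\<chi> i j. c i * ((if j = p i then 1 else 0) - (if j = i then 1 else 0)))"
  define D where "D = d v"
  define ch where "ch k = (p ^^ k) v" for k
  have chS: "ch (Suc k) = p (ch k)" for k by (simp add: ch_def)
  have dch: "k \<le> D \<Longrightarrow> d (ch k) = D - k" for k
  proof (induction k)
    case 0 then show ?case by (simp add: ch_def D_def)
  next
    case (Suc k)
    then have "d (ch k) = D - k" by simp
    with Suc.prems have "d (ch k) \<noteq> 0" by simp
    then have "ch k \<noteq> q" using d0 by metis
    then have "d (p (ch k)) + 1 = D - k" using pd \<open>d (ch k) = D - k\<close> by simp
    then show ?case by (simp add: chS)
  qed
  have chD: "ch D = q" using dch[of D] d0 by simp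
  have chnq: "k < D \<Longrightarrow> ch k \<noteq> q" for k
  proof -
    assume "k < D"
    then have "d (ch k) \<noteq> 0" using dch[of k] by simp
    then show "ch k \<noteq> q" using d0 by metis
  qed
  have chnv: "0 < k \<Longrightarrow> k \<le> D \<Longrightarrow> ch k \<noteq> v" for k using dch[of k] D_def by auto
  have cnz: "u \<noteq> q \<Longrightarrow> c u \<noteq> 0" for u using cinj cq by (metis injD)
  define a where "a = rec_nat (1::real) (\<lambda>k ak. c (ch k) * ak / (c (ch (Suc k)) - c v))"
  have a0: "a 0 = 1" by (simp add: a_def)
  have aS: "a (Suc k) = c (ch k) * a k / (c (ch (Suc k)) - c v)" for k by (simp add: a_def)
  have den: "k < D \<Longrightarrow> c (ch (Suc k)) - c v \<noteq> 0" for k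
    using chnv[of "Suc k"] cinj by (auto dest: injD)
  have arec: "k < D \<Longrightarrow> a k * c (ch k) = a (Suc k) * (c (ch (Suc k)) - c v)" for k
    using den[of k] by (simp add: aS)
  have anz: "k \<le> D \<Longrightarrow> a k \<noteq> 0" for k
  proof (induction k)
    case 0 then show ?case by (simp add: a0)
  next
    case (Suc k) then show ?case using den[of k] cnz[OF chnq[of k]] by (simp add: aS)
  qed
  define ind where "ind j k = (if j = ch k then 1 else (0::real))" for j k
  define y :: "real^'n" where "y = (\<chi> j. \<Sum>k\<le>D. a k * ind j k)"
  have tele: "n \<le> D \<Longrightarrow> (\<Sum>k\<le>n. a k * (c (ch k) * (ind j (Suc k) - ind j k)))
        = a n * c (ch n) * ind j (Suc n) - c v * (\<Sum>k\<le>n. a k * ind j k)" for n j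
  proof (induction n)
    case 0 then show ?case by (simp add: ch_def algebra_simps)
  next
    case (Suc n)
    then have "n < D" by simp
    have e: "a n * c (ch n) * ind j (Suc n) = a (Suc n) * (c (ch (Suc n)) - c v) * ind j (Suc n)"
      using arec[OF \<open>n < D\<close>] by simp
    show ?case using Suc e by (simp add: algebra_simps)
  qed
  have "(y v* G) $ j = (- c v *s y) $ j" for j
  proof -
    have "(y v* G) $ j = (\<Sum>i\<in>UNIV. G $ i $ j * (\<Sum>k\<le>D. a k * ind i k))"
      by (simp add: vector_matrix_mult_def y_def mult.commute)
    also have "\<dots> = (\<Sum>k\<le>D. \<Sum>i\<in>UNIV. G $ i $ j * (a k * ind i k))"
      by (simp add: sum_distrib_left sum.swap[of _ UNIV])
    also have "\<dots> = (\<Sum>k\<le>D. a k * (c (ch k) * (ind j (Suc k) - ind j k)))"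
    proof (rule sum.cong)
      fix k assume "k \<in> {..D}"
      have "(\<Sum>i\<in>UNIV. G $ i $ j * (a k * ind i k)) = (\<Sum>i\<in>UNIV. if i = ch k then G $ i $ j * a k else 0)"
        by (rule sum.cong) (auto simp: ind_def)
      also have "\<dots> = G $ ch k $ j * a k" by simp
      also have "\<dots> = a k * (c (ch k) * (ind j (Suc k) - ind j k))"
        by (simp add: G_def ind_def chS)
      finally show "(\<Sum>i\<in>UNIV. G $ i $ j * (a k * ind i k)) = a k * (c (ch k) * (ind j (Suc k) - ind j k))" .
    qed simp
    also have "\<dots> = - c v * (\<Sum>k\<le>D. a k * ind j k)"
      using tele[of D j] chD cq by simp
    finally show ?thesis by (simp add: y_def)
  qed
  then have "y v* G = (- c v) *s y" by (simp add: vec_eq_iff)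
  moreover have "y $ q \<noteq> 0"
  proof -
    have "y $ q = (\<Sum>k\<le>D. a k * ind q k)" unfolding y_def by simp
    also have "\<dots> = (\<Sum>k\<le>D. if k = D then a k else 0)"
    proof (rule sum.cong)
      fix k assume "k \<in> {..D}"
      then have "k = D \<or> k < D" by auto
      then show "a k * ind q k = (if k = D then a k else 0)"
        using chnq[of k] chD by (auto simp: ind_def)
    qed simp
    also have "\<dots> = a D" by simp
    finally show ?thesis using anz[of D] by simp
  qed
  ultimately show ?thesis unfolding G_def by blast
qed

theorem lemma2:
  fixes E :: "'n::finite \<Rightarrow> 'n \<Rightarrow> bool" and q :: 'n
  assumes "strongly_connected E"
  shows "\<exists>G :: real^'n^'n.
           (\<forall>i. (\<Sum>j\<in>UNIV. G $ i $ j) = 0) \<and>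
           (\<forall>i j. j \<noteq> i \<and> \<not> E j i \<longrightarrow> G $ i $ j = 0) \<and>
           controllable_pair G (unit_vec q)"
proof -
  obtain p and d :: "'n \<Rightarrow> nat" where d0: "\<forall>u. d u = 0 \<longleftrightarrow> u = q"
    and pd: "\<forall>u. u \<noteq> q \<longrightarrow> E (p u) u \<and> d (p u) + 1 = d u"
    using tree_exists[OF assms] by blast
  obtain f :: "'n \<Rightarrow> nat" and n where "f ` UNIV = {i. i < n} \<and> inj_on f UNIV"
    using finite_imp_inj_to_nat_seg[of "UNIV :: 'n set"] by auto
  then have injf: "inj f" by simp
  define c where "c u = (if u = q then 0 else real (f u) + 1)" for u
  have cq: "c q = 0" by (simp add: c_def)
  have cinj: "inj c"
  proof (rule injI)
    fix x y assume "c x = c y"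
    then show "x = y" using injf unfolding c_def
      by (auto split: if_splits dest: injD)
  qed
  define G :: "real^'n^'n" where "G = (\<chi> i j. c i * ((if j = p i then 1 else 0) - (if j = i then 1 else 0)))"
  have ev: "\<forall>v. \<exists>y. y v* G = (\<lambda>v. - c v) v *s y \<and> y $ q \<noteq> 0"
    using left_eig[OF d0 _ cinj cq] pd unfolding G_def by blast
  have lam_inj: "inj (\<lambda>v. - c v)" using cinj by (auto simp: inj_def)
  have "controllable_pair G (unit_vec q)" by (rule krylov_ctrb[OF lam_inj ev])
  moreover have "\<forall>i. (\<Sum>j\<in>UNIV. G $ i $ j) = 0"
    by (simp add: G_def sum_distrib_left[symmetric] sum_subtractf)
  moreover have "\<forall>i j. j \<noteq> i \<and> \<not> E j i \<longrightarrow> G $ i $ j = 0"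
    using pd cq by (auto simp: G_def)
  ultimately show ?thesis by blast
qed

end
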